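(* Let $X$ be an irreducible affine variety over $\mathbb{C}$, $\mathcal{F}$ an algebraic foliation on $X$, and $F$ a finite-dimensional $\mathbb{C}$-vector subspace of $\mathcal{O}_X$. Then the map $\varphi_F:X\to\mathbb{N}$, $\varphi_F(x)=\dim_{\mathbb{C}}F-\dim_{\mathbb{C}}(I(\mathcal{F},x)\cap F)$, is lower semi-continuous for the Zariski topology, i.e. $\varphi_F^{-1}([0,r])$ is Zariski closed for every $r$.
   Context: $\mathcal{O}_X$ is the ring of regular functions on $X$; an algebraic foliation $\mathcal{F}$ is a collection of $\mathbb{C}$-derivations of $\mathcal{O}_X$ stable under Lie bracket. For $x\in X$, $I(\mathcal{F},x)$ is the largest ideal $I$ of $\mathcal{O}_X$ contained in the maximal ideal of $x$ with $\partial(I)\subseteq I$ for all $\partial\in\mathcal{F}$. *)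

theory Defs
  imports Complex_Main "HOL-Library.Function_Algebras"
begin

text \<open>Affine space C^n is modelled as the type of functions 'n => complex with 'n finite.
  Polynomial functions on C^n are generated by constants and coordinates under + and *.\<close>

inductive_set polyfun :: "(('n::finite \<Rightarrow> complex) \<Rightarrow> complex) set" where
  pf_const: "(\<lambda>x. c) \<in> polyfun"
| pf_coord: "(\<lambda>x. x i) \<in> polyfun"
| pf_add: "p \<in> polyfun \<Longrightarrow> q \<in> polyfun \<Longrightarrow> (\<lambda>x. p x + q x) \<in> polyfun"
| pf_mult: "p \<in> polyfun \<Longrightarrow> q \<in> polyfun \<Longrightarrow> (\<lambda>x. p x * q x) \<in> polyfun"

definition zariski_closed :: "('n::finite \<Rightarrow> complex) set \<Rightarrow> bool" where
  "zariski_closed A \<longleftrightarrow> (\<exists>S \<subseteq> polyfun. A = {x. \<forall>p\<in>S. p x = 0})"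

definition irreducible_affine_variety :: "('n::finite \<Rightarrow> complex) set \<Rightarrow> bool" where
  "irreducible_affine_variety X \<longleftrightarrow> zariski_closed X \<and> X \<noteq> {} \<and>
     (\<forall>A B. zariski_closed A \<longrightarrow> zariski_closed B \<longrightarrow> X = A \<union> B \<longrightarrow> X = A \<or> X = B)"

text \<open>The ring O_X of regular functions on X: restrictions of polynomial functions to X,
  represented canonically as functions that vanish outside X.\<close>
definition regular_functions :: "('n::finite \<Rightarrow> complex) set \<Rightarrow> (('n \<Rightarrow> complex) \<Rightarrow> complex) set" where
  "regular_functions X = {f. \<exists>p\<in>polyfun. f = (\<lambda>x. if x \<in> X then p x else 0)}"

definition cscale :: "complex \<Rightarrow> ('a \<Rightarrow> complex) \<Rightarrow> ('a \<Rightarrow> complex)" where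
  "cscale c f = (\<lambda>x. c * f x)"

definition is_derivation ::
  "('n::finite \<Rightarrow> complex) set \<Rightarrow> ((('n \<Rightarrow> complex) \<Rightarrow> complex) \<Rightarrow> (('n \<Rightarrow> complex) \<Rightarrow> complex)) \<Rightarrow> bool" where
  "is_derivation X D \<longleftrightarrow>
     (\<forall>f\<in>regular_functions X. D f \<in> regular_functions X) \<and>
     (\<forall>f\<in>regular_functions X. \<forall>g\<in>regular_functions X. D (f + g) = D f + D g) \<and>
     (\<forall>c. \<forall>f\<in>regular_functions X. D (cscale c f) = cscale c (D f)) \<and>
     (\<forall>f\<in>regular_functions X. \<forall>g\<in>regular_functions X. D (f * g) = f * D g + g * D f)"

definition algebraic_foliation ::
  "('n::finite \<Rightarrow> complex) set \<Rightarrow> ((('n \<Rightarrow> complex) \<Rightarrow> complex) \<Rightarrow> (('n \<Rightarrow> complex) \<Rightarrow> complex)) set \<Rightarrow> bool" where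
  "algebraic_foliation X Fol \<longleftrightarrow>
     (\<forall>D\<in>Fol. is_derivation X D) \<and>
     (\<forall>D1\<in>Fol. \<forall>D2\<in>Fol. \<exists>D\<in>Fol. \<forall>f\<in>regular_functions X. D f = D1 (D2 f) - D2 (D1 f))"

definition ideal_of :: "('n::finite \<Rightarrow> complex) set \<Rightarrow> (('n \<Rightarrow> complex) \<Rightarrow> complex) set \<Rightarrow> bool" where
  "ideal_of X I \<longleftrightarrow> I \<subseteq> regular_functions X \<and> 0 \<in> I \<and>
     (\<forall>f\<in>I. \<forall>g\<in>I. f + g \<in> I) \<and> (\<forall>a\<in>regular_functions X. \<forall>f\<in>I. a * f \<in> I)"

definition max_ideal :: "('n::finite \<Rightarrow> complex) set \<Rightarrow> ('n \<Rightarrow> complex) \<Rightarrow> (('n \<Rightarrow> complex) \<Rightarrow> complex) set" where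
  "max_ideal X x = {f \<in> regular_functions X. f x = 0}"

definition invariant_ideal_at where
  "invariant_ideal_at X Fol x I \<longleftrightarrow> ideal_of X I \<and> I \<subseteq> max_ideal X x \<and> (\<forall>D\<in>Fol. \<forall>f\<in>I. D f \<in> I)"

definition I_fol where
  "I_fol X Fol x = (GREATEST I. invariant_ideal_at X Fol x I)"

definition phi_F where
  "phi_F X Fol F x = vector_space.dim cscale F - vector_space.dim cscale (I_fol X Fol x \<inter> F)"

end

theory Submission
  imports Defs "Jordan_Normal_Form.Determinant"
begin


lemma pf_sum: "finite A \<Longrightarrow> (\<And>a. a \<in> A \<Longrightarrow> f a \<in> polyfun) \<Longrightarrow> (\<lambda>x. \<Sum>a\<in>A. f a x) \<in> polyfun"
proof (induction A rule: finite_induct)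
  case empty then show ?case using polyfun.pf_const[of 0] by simp
next
  case (insert a A)
  then show ?case using polyfun.pf_add[of "f a" "\<lambda>x. \<Sum>a\<in>A. f a x"] by simp
qed

lemma pf_prod: "finite A \<Longrightarrow> (\<And>a. a \<in> A \<Longrightarrow> f a \<in> polyfun) \<Longrightarrow> (\<lambda>x. \<Prod>a\<in>A. f a x) \<in> polyfun"
proof (induction A rule: finite_induct)
  case empty then show ?case using polyfun.pf_const[of 1] by simp
next
  case (insert a A)
  then show ?case using polyfun.pf_mult[of "f a" "\<lambda>x. \<Prod>a\<in>A. f a x"] by simp
qed

lemma pf_cmult: "p \<in> polyfun \<Longrightarrow> (\<lambda>x. c * p x) \<in> polyfun"
  using polyfun.pf_mult[OF polyfun.pf_const] by blast

lemma pf_det: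
  assumes "\<And>i j. Q i j \<in> polyfun"
  shows "(\<lambda>x. det (mat n n (\<lambda>(i,j). Q i j x))) \<in> polyfun"
proof -
  have "(\<lambda>x. \<Sum>p\<in>{p. p permutes {0..<n}}. signof p * (\<Prod>i = 0..<n. Q i (p i) x)) \<in> polyfun"
    by (intro pf_sum pf_cmult pf_prod assms) (auto simp: finite_permutations)
  moreover have "det (mat n n (\<lambda>(i,j). Q i j x)) =
     (\<Sum>p\<in>{p. p permutes {0..<n}}. signof p * (\<Prod>i = 0..<n. Q i (p i) x))" for x
  proof -
    have "det (mat n n (\<lambda>(i,j). Q i j x)) = (\<Sum>p\<in>{p. p permutes {0..<n}}. signof p * (\<Prod>i = 0..<n. mat n n (\<lambda>(i,j). Q i j x) $$ (i, p i)))"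
      by (rule det_def') simp
    also have "\<dots> = (\<Sum>p\<in>{p. p permutes {0..<n}}. signof p * (\<Prod>i = 0..<n. Q i (p i) x))"
      by (intro sum.cong refl arg_cong2[where f="(*)"] prod.cong) (auto simp: permutes_in_image)
    finally show ?thesis .
  qed
  ultimately show ?thesis by simp
qed

lemma rf_iff: "f \<in> regular_functions X \<longleftrightarrow> (\<exists>p\<in>polyfun. f = (\<lambda>x. if x \<in> X then p x else 0))"
  unfolding regular_functions_def by simp

lemma rf_add: "f \<in> regular_functions X \<Longrightarrow> g \<in> regular_functions X \<Longrightarrow> f + g \<in> regular_functions X"
proof -
  assume "f \<in> regular_functions X" "g \<in> regular_functions X"
  then obtain p q where "p \<in> polyfun" "q \<in> polyfun" "f = (\<lambda>x. if x \<in> X then p x else 0)" "g = (\<lambda>x. if x \<in> X then q x else 0)"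
    unfolding rf_iff by blast
  then show ?thesis unfolding rf_iff by (intro bexI[of _ "\<lambda>x. p x + q x"]) (auto simp: fun_eq_iff intro: polyfun.pf_add)
qed

lemma rf_mult: "f \<in> regular_functions X \<Longrightarrow> g \<in> regular_functions X \<Longrightarrow> f * g \<in> regular_functions X"
proof -
  assume "f \<in> regular_functions X" "g \<in> regular_functions X"
  then obtain p q where "p \<in> polyfun" "q \<in> polyfun" "f = (\<lambda>x. if x \<in> X then p x else 0)" "g = (\<lambda>x. if x \<in> X then q x else 0)"
    unfolding rf_iff by blast
  then show ?thesis unfolding rf_iff by (intro bexI[of _ "\<lambda>x. p x * q x"]) (auto simp: fun_eq_iff intro: polyfun.pf_mult)
qed

lemma rf_zero: "0 \<in> regular_functions X"
  unfolding rf_iff by (auto intro!: bexI[OF _ polyfun.pf_const[of 0]] simp: fun_eq_iff)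

lemma rf_constX: "(\<lambda>x. if x \<in> X then c else 0) \<in> regular_functions X"
  unfolding rf_iff by (auto intro!: bexI[OF _ polyfun.pf_const[of c]] simp: fun_eq_iff)

lemma rf_cscale: "f \<in> regular_functions X \<Longrightarrow> cscale c f \<in> regular_functions X"
proof -
  assume "f \<in> regular_functions X"
  then obtain p where "p \<in> polyfun" "f = (\<lambda>x. if x \<in> X then p x else 0)"
    unfolding rf_iff by blast
  then show ?thesis unfolding rf_iff cscale_def by (intro bexI[of _ "\<lambda>x. c * p x"]) (auto simp: fun_eq_iff intro: pf_cmult)
qed

lemma rf_cscale_eq: "f \<in> regular_functions X \<Longrightarrow> cscale c f = (\<lambda>x. if x \<in> X then c else 0) * f"
  unfolding rf_iff cscale_def by (auto simp: fun_eq_iff)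

lemma rf_sum: "finite A \<Longrightarrow> (\<And>a. a \<in> A \<Longrightarrow> f a \<in> regular_functions X) \<Longrightarrow> sum f A \<in> regular_functions X"
  by (induction A rule: finite_induct) (auto intro: rf_add rf_zero)

lemma rf_poly: "f \<in> regular_functions X \<Longrightarrow> \<exists>p\<in>polyfun. \<forall>x\<in>X. f x = p x"
  unfolding rf_iff by auto

lemma vs_cscale: "vector_space (cscale :: complex \<Rightarrow> ('a \<Rightarrow> complex) \<Rightarrow> _)"
  by unfold_locales (auto simp: cscale_def fun_eq_iff algebra_simps)



fun iterD :: "('f \<Rightarrow> 'f) list \<Rightarrow> 'f \<Rightarrow> 'f" where
  "iterD [] f = f"
| "iterD (D # ws) f = D (iterD ws f)"

lemma iterD_snoc: "iterD (ws @ [D]) f = iterD ws (D f)"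
  by (induction ws) auto

locale foli =
  fixes X :: "('n::finite \<Rightarrow> complex) set"
    and Fol :: "((('n \<Rightarrow> complex) \<Rightarrow> complex) \<Rightarrow> (('n \<Rightarrow> complex) \<Rightarrow> complex)) set"
  assumes der: "\<And>D. D \<in> Fol \<Longrightarrow> is_derivation X D"
begin

lemma der_zero: "D \<in> Fol \<Longrightarrow> D 0 = 0"
proof -
  assume "D \<in> Fol"
  then have "D (0 + 0) = D 0 + D 0" using der rf_zero unfolding is_derivation_def by blast
  then show ?thesis by simp
qed

lemma iterD_rf: "ws \<in> lists Fol \<Longrightarrow> f \<in> regular_functions X \<Longrightarrow> iterD ws f \<in> regular_functions X"
proof (induction ws)
  case (Cons D ws)
  have "D \<in> Fol" "ws \<in> lists Fol" using Cons.prems by auto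
  then show ?case using Cons.IH Cons.prems(2) der unfolding is_derivation_def by (simp only: iterD.simps)
qed simp

lemma iterD_add: "ws \<in> lists Fol \<Longrightarrow> f \<in> regular_functions X \<Longrightarrow> g \<in> regular_functions X \<Longrightarrow>
   iterD ws (f + g) = iterD ws f + iterD ws g"
proof (induction ws)
  case (Cons D ws)
  have "iterD (D # ws) (f + g) = D (iterD ws f + iterD ws g)" using Cons by (simp del: plus_fun_apply)
  also have "\<dots> = D (iterD ws f) + D (iterD ws g)"
    using der[of D] iterD_rf[of ws f] iterD_rf[of ws g] Cons.prems unfolding is_derivation_def by auto
  also have "\<dots> = iterD (D # ws) f + iterD (D # ws) g" by (simp only: iterD.simps)
  finally show ?case .
qed simp

lemma iterD_zero: "ws \<in> lists Fol \<Longrightarrow> iterD ws 0 = 0"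
proof (induction ws)
  case (Cons D ws)
  have "D \<in> Fol" "ws \<in> lists Fol" using Cons.prems by auto
  then have "D \<in> Fol" "iterD ws 0 = 0" using Cons.IH by blast+
  then show ?case by (simp only: iterD.simps der_zero)
qed (simp only: iterD.simps)

lemma iterD_cscale: "ws \<in> lists Fol \<Longrightarrow> f \<in> regular_functions X \<Longrightarrow> 
   iterD ws (cscale c f) = cscale c (iterD ws f)"
proof (induction ws)
  case (Cons D ws)
  have D: "D \<in> Fol" and ws: "ws \<in> lists Fol" using Cons.prems by auto
  have "iterD (D # ws) (cscale c f) = D (cscale c (iterD ws f))" using Cons.IH[OF ws Cons.prems(2)] by simp
  also have "\<dots> = cscale c (D (iterD ws f))"
    using der[OF D] iterD_rf[OF ws Cons.prems(2)] unfolding is_derivation_def by blast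
  finally show ?case by simp
qed simp

lemma iterD_lincomb: "ws \<in> lists Fol \<Longrightarrow> (\<And>j. j < (n::nat) \<Longrightarrow> g j \<in> regular_functions X) \<Longrightarrow>
   iterD ws (\<Sum>j<n. cscale (c j) (g j)) x = (\<Sum>j<n. c j * iterD ws (g j) x)"
proof (induction n)
  case 0
  have "iterD ws (\<Sum>j<0. cscale (c j) (g j)) x = iterD ws 0 x" by (simp only: lessThan_0 sum.empty)
  also have "\<dots> = (0::('n \<Rightarrow> complex) \<Rightarrow> complex) x" by (simp only: iterD_zero[OF 0(1)])
  also have "\<dots> = 0" by (rule zero_fun_apply)
  also have "\<dots> = (\<Sum>j<0. c j * iterD ws (g j) x)" by simp
  finally show ?case .
next
  case (Suc n)
  have eq: "iterD ws (\<Sum>j<Suc n. cscale (c j) (g j)) = iterD ws (\<Sum>j<n. cscale (c j) (g j)) + iterD ws (cscale (c n) (g n))"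
    using Suc.prems by (simp, intro iterD_add rf_sum rf_cscale) auto
  have gn: "g n \<in> regular_functions X" using Suc.prems by simp
  have "iterD ws (\<Sum>j<Suc n. cscale (c j) (g j)) x = iterD ws (\<Sum>j<n. cscale (c j) (g j)) x + iterD ws (cscale (c n) (g n)) x"
    by (simp only: eq plus_fun_apply)
  also have "iterD ws (cscale (c n) (g n)) x = c n * iterD ws (g n) x"
    by (subst iterD_cscale[OF Suc.prems(1) gn]) (simp add: cscale_def)
  also have "iterD ws (\<Sum>j<n. cscale (c j) (g j)) x = (\<Sum>j<n. c j * iterD ws (g j) x)"
    using Suc by simp
  finally show ?case by simp
qed

definition Jset :: "('n \<Rightarrow> complex) \<Rightarrow> (('n \<Rightarrow> complex) \<Rightarrow> complex) set" where
  "Jset x = {f \<in> regular_functions X. \<forall>ws\<in>lists Fol. iterD ws f x = 0}"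

lemma J_inv: "D \<in> Fol \<Longrightarrow> f \<in> Jset x \<Longrightarrow> D f \<in> Jset x"
proof -
  assume D: "D \<in> Fol" and f: "f \<in> Jset x"
  have "iterD ws (D f) x = 0" if "ws \<in> lists Fol" for ws
  proof -
    have "ws @ [D] \<in> lists Fol" using that D by simp
    then have "iterD (ws @ [D]) f x = 0" using f unfolding Jset_def by blast
    then show ?thesis by (simp only: iterD_snoc)
  qed
  moreover have "D f \<in> regular_functions X" using der[OF D] f unfolding is_derivation_def Jset_def by blast
  ultimately show ?thesis unfolding Jset_def by blast
qed

lemma J_mult: "ws \<in> lists Fol \<Longrightarrow> a \<in> regular_functions X \<Longrightarrow> f \<in> Jset x \<Longrightarrow> iterD ws (a * f) x = 0"
proof (induction ws arbitrary: a f rule: rev_induct)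
  case Nil
  have "[] \<in> lists Fol" by simp
  then have "iterD [] f x = 0" using Nil.prems(3) unfolding Jset_def by blast
  then have "f x = 0" by (simp only: iterD.simps)
  then show ?case by (simp only: iterD.simps times_fun_apply mult_zero_right)
next
  case (snoc D ws)
  have D: "D \<in> Fol" and ws: "ws \<in> lists Fol" using snoc.prems by auto
  have f: "f \<in> regular_functions X" using snoc.prems unfolding Jset_def by auto
  have Da: "D a \<in> regular_functions X" and Df: "D f \<in> regular_functions X"
    using der[OF D] snoc.prems f unfolding is_derivation_def by auto
  have "iterD (ws @ [D]) (a * f) = iterD ws (a * D f + f * D a)"
    using der[OF D] snoc.prems f unfolding is_derivation_def by (simp add: iterD_snoc)
  also have "\<dots> = iterD ws (a * D f) + iterD ws (f * D a)"
    by (rule iterD_add[OF ws rf_mult[OF snoc.prems(2) Df] rf_mult[OF f Da]])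
  also have "f * D a = D a * f" by (rule mult.commute)
  finally have e: "iterD (ws @ [D]) (a * f) x = iterD ws (a * D f) x + iterD ws (D a * f) x"
    by (simp only: plus_fun_apply)
  have i1: "iterD ws (a * D f) x = 0" by (rule snoc.IH[OF ws snoc.prems(2) J_inv[OF D snoc.prems(3)]])
  have i2: "iterD ws (D a * f) x = 0" by (rule snoc.IH[OF ws Da snoc.prems(3)])
  show ?case by (simp only: e i1 i2 add_0_right)
qed

lemma J_invariant: "invariant_ideal_at X Fol x (Jset x)"
proof -
  have inv: "\<forall>D\<in>Fol. \<forall>f\<in>Jset x. D f \<in> Jset x"
    by (intro ballI) (erule (1) J_inv)
  have i1: "Jset x \<subseteq> regular_functions X" unfolding Jset_def by auto
  have i2: "0 \<in> Jset x" unfolding Jset_def using rf_zero iterD_zero by auto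
  have i3: "\<forall>f\<in>Jset x. \<forall>g\<in>Jset x. f + g \<in> Jset x"
    using iterD_add rf_add unfolding Jset_def by auto
  have i4: "\<forall>a\<in>regular_functions X. \<forall>f\<in>Jset x. a * f \<in> Jset x"
    using J_mult rf_mult unfolding Jset_def by auto
  have i5: "Jset x \<subseteq> max_ideal X x" unfolding Jset_def max_ideal_def by (auto dest: bspec[of _ _ "[]"])
  show ?thesis unfolding invariant_ideal_at_def ideal_of_def by (intro conjI i1 i2 i3 i4 i5 inv)
qed

lemma J_greatest: "invariant_ideal_at X Fol x I \<Longrightarrow> I \<subseteq> Jset x"
proof
  fix f assume I: "invariant_ideal_at X Fol x I" and f: "f \<in> I"
  have "ws \<in> lists Fol \<Longrightarrow> iterD ws f \<in> I" for ws
  proof (induction ws)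
    case (Cons D ws)
    have "D \<in> Fol" "ws \<in> lists Fol" using Cons.prems by auto
    then have D: "D \<in> Fol" and fI: "iterD ws f \<in> I" using Cons.IH by blast+
    have inv: "\<forall>D\<in>Fol. \<forall>f\<in>I. D f \<in> I" using I unfolding invariant_ideal_at_def by (elim conjE)
    show ?case using inv[rule_format, OF D fI] by (simp only: iterD.simps)
  qed (simp add: f)
  moreover have "I \<subseteq> max_ideal X x" "I \<subseteq> regular_functions X"
    using I by (simp_all add: invariant_ideal_at_def ideal_of_def)
  ultimately show "f \<in> Jset x" using f unfolding Jset_def max_ideal_def by auto
qed

lemma I_fol_eq: "I_fol X Fol x = Jset x"
  unfolding I_fol_def by (intro Greatest_equality J_invariant J_greatest)

end


context vector_space begin

lemma fd_basis:
  assumes "finite Bf" "V \<subseteq> span Bf"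
  obtains C where "finite C" "independent C" "C \<subseteq> V" "V \<subseteq> span C" "card C = dim V"
proof -
  obtain C where C: "C \<subseteq> V" "independent C" "V \<subseteq> span C" "card C = dim V" by (rule basis_exists)
  have "finite C" using independent_span_bound[OF assms(1) C(2)] C(1) assms(2) by blast
  with C show ?thesis using that by blast
qed

lemma fd_dim_mono:
  assumes "finite Bf" "C \<subseteq> span Bf" "A \<subseteq> span C"
  shows "dim A \<le> dim C"
proof -
  obtain BC where "finite BC" "independent BC" "BC \<subseteq> C" "C \<subseteq> span BC" "card BC = dim C"
    using fd_basis[OF assms(1,2)] by blast
  moreover have "A \<subseteq> span BC"
    using assms(3) \<open>C \<subseteq> span BC\<close> by (metis span_mono span_span subset_trans)
  ultimately show ?thesis using dim_le_card by metis
qed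

lemma fd_dim_insert:
  assumes "finite Bf" "S \<subseteq> span Bf" "x \<notin> span S"
  shows "dim (insert x S) = dim S + 1"
proof -
  obtain C where C: "finite C" "independent C" "C \<subseteq> S" "S \<subseteq> span C" "card C = dim S"
    using fd_basis[OF assms(1,2)] by blast
  have spC: "span C = span S" using C by (metis span_mono span_span subset_antisym)
  have xC: "x \<notin> C" using assms(3) C(3) span_base by blast
  have ind: "independent (insert x C)" using independent_insertI[OF _ C(2)] assms(3) spC by simp
  have "span (insert x C) = span (insert x S)"
    using spC by (metis span_insert)
  then have "dim (insert x S) = card (insert x C)" using dim_eq_card[OF _ ind] by simp
  also have "\<dots> = dim S + 1" using C xC by simp
  finally show ?thesis .
qed

lemma fd_dim_psubset:
  assumes "finite Bf" "T \<subseteq> span Bf" "subspace S" "subspace T" "S \<subset> T"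
  shows "dim S < dim T"
proof -
  obtain y where y: "y \<in> T" "y \<notin> S" using assms(5) by blast
  have "y \<notin> span S" using y assms(3) by (simp add: span_eq_iff[THEN iffD2])
  then have "dim (insert y S) = dim S + 1"
    using fd_dim_insert[OF assms(1)] assms(2,5) by blast
  moreover have "dim (insert y S) \<le> dim T"
    using fd_dim_mono[OF assms(1,2)] y assms(4,5) span_superset[of T] by (metis insert_subset psubset_imp_subset subset_trans)
  ultimately show ?thesis by simp
qed

lemma lincomb_forward:
  assumes "finite Bf" "F \<subseteq> span Bf" "subspace F"
  shows "subspace K \<Longrightarrow> K \<subseteq> F \<Longrightarrow> dim K + n \<le> dim F \<Longrightarrow>
    \<exists>g. (\<forall>j<n. g j \<in> F) \<and> (\<forall>c. (\<Sum>j<n. c j *s g j) \<in> K \<longrightarrow> (\<forall>j<n. c j = 0))"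
proof (induction n arbitrary: K)
  case 0 then show ?case by simp
next
  case (Suc n)
  have "\<not> F \<subseteq> K"
  proof
    assume "F \<subseteq> K"
    then have "dim F \<le> dim K" using fd_dim_mono[OF assms(1), of K F] Suc.prems assms(2) span_superset[of K]
      by blast
    with Suc.prems(3) show False by simp
  qed
  then obtain g0 where g0: "g0 \<in> F" "g0 \<notin> K" by blast
  define K' where "K' = span (insert g0 K)"
  have K'sub: "subspace K'" unfolding K'_def by simp
  have K'F: "K' \<subseteq> F" unfolding K'_def using span_minimal[OF _ assms(3)] g0 Suc.prems(2) by blast
  have spK: "span K = K" using Suc.prems(1) by simp
  have "dim K' = dim K + 1" unfolding K'_def dim_span
    using fd_dim_insert[OF assms(1), of K g0] Suc.prems(2) assms(2) g0 spK by auto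
  then have "dim K' + n \<le> dim F" using Suc.prems(3) by simp
  then obtain g' where g': "\<forall>j<n. g' j \<in> F" "\<forall>c. (\<Sum>j<n. c j *s g' j) \<in> K' \<longrightarrow> (\<forall>j<n. c j = 0)"
    using Suc.IH[OF K'sub K'F] by blast
  define g where "g = (\<lambda>j. if j = 0 then g0 else g' (j - 1))"
  have "\<forall>j<Suc n. g j \<in> F" using g' g0 unfolding g_def by auto
  moreover have "\<forall>j<Suc n. c j = 0" if c: "(\<Sum>j<Suc n. c j *s g j) \<in> K" for c
  proof -
    have split: "(\<Sum>j<Suc n. c j *s g j) = c 0 *s g0 + (\<Sum>j<n. c (Suc j) *s g' j)"
      unfolding g_def by (subst sum.lessThan_Suc_shift) simp
    have "(\<Sum>j<n. c (Suc j) *s g' j) = (\<Sum>j<Suc n. c j *s g j) - c 0 *s g0"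
      using split by simp
    also have "\<dots> \<in> K'" unfolding K'_def
      using c span_base[of g0 "insert g0 K"] span_superset[of "insert g0 K"]
      by (intro span_diff span_scale) auto
    finally have inK: "(\<Sum>j<n. c (Suc j) *s g' j) \<in> K'" .
    have cs: "\<forall>j<n. c (Suc j) = 0" using spec[OF g'(2), of "\<lambda>j. c (Suc j)"] inK by simp
    then have "(\<Sum>j<n. c (Suc j) *s g' j) = 0" by simp
    then have "c 0 *s g0 \<in> K" using c split by simp
    then have c0: "c 0 = 0"
    proof (rule contrapos_pp)
      assume "c 0 \<noteq> 0"
      then have "g0 = inverse (c 0) *s (c 0 *s g0)" by simp
      then show "c 0 *s g0 \<notin> K" using g0(2) Suc.prems(1) subspace_scale by metis
    qed
    show ?thesis
    proof (intro allI impI)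
      fix j assume "j < Suc n"
      then show "c j = 0" using c0 cs by (cases j) auto
    qed
  qed
  ultimately show ?case by blast
qed

lemma lincomb_backward:
  assumes "finite Bf" "F \<subseteq> span Bf" "subspace F"
  shows "subspace K \<Longrightarrow> K \<subseteq> F \<Longrightarrow> (\<forall>j<n. g j \<in> F) \<Longrightarrow>
    (\<forall>c. (\<Sum>j<n. c j *s g j) \<in> K \<longrightarrow> (\<forall>j<n. c j = 0)) \<Longrightarrow> dim K + n \<le> dim F"
proof (induction n arbitrary: K g)
  case 0
  then show ?case using fd_dim_mono[OF assms(1,2), of K] span_superset[of F] by auto
next
  case (Suc n)
  define g0 where "g0 = g 0"
  have g0F: "g0 \<in> F" using Suc.prems(3) g0_def by auto
  have g0K: "g0 \<notin> K"
  proof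
    assume "g0 \<in> K"
    define c :: "nat \<Rightarrow> 'a" where "c = (\<lambda>j. if j = 0 then 1 else 0)"
    have "(\<Sum>j<Suc n. c j *s g j) = g0"
      unfolding c_def g0_def by (subst sum.lessThan_Suc_shift) simp
    then have "c 0 = 0" using Suc.prems(4) \<open>g0 \<in> K\<close> by auto
    then show False unfolding c_def by simp
  qed
  define K' where "K' = span (insert g0 K)"
  have K'sub: "subspace K'" unfolding K'_def by simp
  have K'F: "K' \<subseteq> F" unfolding K'_def using span_minimal[OF _ assms(3)] g0F Suc.prems(2) by blast
  have spK: "span K = K" using Suc.prems(1) by simp
  have dK': "dim K' = dim K + 1" unfolding K'_def dim_span
    using fd_dim_insert[OF assms(1), of K g0] Suc.prems(2) assms(2) g0K spK by auto
  have "\<forall>j<n. g (Suc j) \<in> F" using Suc.prems(3) by simp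
  moreover have "\<forall>c. (\<Sum>j<n. c j *s g (Suc j)) \<in> K' \<longrightarrow> (\<forall>j<n. c j = 0)"
  proof (rule allI, rule impI)
    fix c assume "(\<Sum>j<n. c j *s g (Suc j)) \<in> K'"
    then obtain k where k: "(\<Sum>j<n. c j *s g (Suc j)) - k *s g0 \<in> K"
      unfolding K'_def using span_breakdown_eq spK by blast
    define c' where "c' = (\<lambda>j. if j = 0 then - k else c (j - 1))"
    have "(\<Sum>j<Suc n. c' j *s g j) = (- k) *s g0 + (\<Sum>j<n. c j *s g (Suc j))"
      unfolding c'_def g0_def by (subst sum.lessThan_Suc_shift) simp
    also have "\<dots> = (\<Sum>j<n. c j *s g (Suc j)) - k *s g0" by simp
    finally have "\<forall>j<Suc n. c' j = 0" using Suc.prems(4) k by metis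
    then show "\<forall>j<n. c j = 0" unfolding c'_def by auto
  qed
  ultimately have "dim K' + n \<le> dim F" by (rule Suc.IH[OF K'sub K'F, of "\<lambda>j. g (Suc j)"])
  then show ?case using dK' by simp
qed

lemma finite_witness:
  assumes "finite Bf" "F \<subseteq> span Bf" "subspace F" "\<And>w. subspace (H w)"
  shows "\<exists>S. finite S \<and> S \<subseteq> W \<and> F \<inter> (\<Inter>w\<in>S. H w) \<subseteq> (\<Inter>w\<in>W. H w)"
proof -
  let ?P = "\<lambda>S. finite S \<and> S \<subseteq> W"
  let ?d = "\<lambda>S. dim (F \<inter> (\<Inter>w\<in>S. H w))"
  obtain S where S: "?P S" "\<forall>S'. ?P S' \<longrightarrow> ?d S \<le> ?d S'"
    using ex_has_least_nat[of ?P "{}" ?d] by auto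
  have "F \<inter> (\<Inter>w\<in>S. H w) \<subseteq> (\<Inter>w\<in>W. H w)"
  proof
    fix f assume f: "f \<in> F \<inter> (\<Inter>w\<in>S. H w)"
    show "f \<in> (\<Inter>w\<in>W. H w)"
    proof (rule ccontr)
      assume "f \<notin> (\<Inter>w\<in>W. H w)"
      then obtain w where w: "w \<in> W" "f \<notin> H w" by blast
      let ?S1 = "insert w S"
      have sub0: "subspace (F \<inter> (\<Inter>w\<in>S. H w))" by (intro subspace_inter assms(3) subspace_Int assms(4))
      have sub1: "subspace (F \<inter> (\<Inter>w\<in>?S1. H w))" by (intro subspace_inter assms(3) subspace_Int assms(4))
      have ps: "F \<inter> (\<Inter>w\<in>?S1. H w) \<subset> F \<inter> (\<Inter>w\<in>S. H w)" using f w by blast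
      have Tsub: "F \<inter> (\<Inter>w\<in>S. H w) \<subseteq> span Bf" using assms(2) by blast
      have "?d ?S1 < ?d S"
        by (rule fd_dim_psubset[OF assms(1) Tsub sub1 sub0 ps])
      moreover have "?P ?S1" using S w by auto
      ultimately show False using S(2) by (meson not_le)
    qed
  qed
  then show ?thesis using S by blast
qed

end


lemma mat_mult_vec_zero:
  assumes "\<forall>l<(k::nat). (\<Sum>j<n. A l j * c j) = (0::complex)"
  shows "mat n n (\<lambda>(i,j). \<Sum>l<k. b i l * A l j) *\<^sub>v vec n c = 0\<^sub>v n"
proof (rule eq_vecI)
  fix i assume "i < dim_vec (0\<^sub>v n :: complex vec)"
  then have i: "i < n" by simp
  have "(mat n n (\<lambda>(i,j). \<Sum>l<k. b i l * A l j) *\<^sub>v vec n c) $ i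
      = (\<Sum>j\<in>{0..<n}. (\<Sum>l<k. b i l * A l j) * c j)"
    using i by (simp add: scalar_prod_def)
  also have "\<dots> = (\<Sum>l<k. b i l * (\<Sum>j<n. A l j * c j))"
    by (simp add: sum_distrib_left sum_distrib_right lessThan_atLeast0 mult.assoc) (rule sum.swap)
  also have "\<dots> = 0" using assms by simp
  finally show "(mat n n (\<lambda>(i,j). \<Sum>l<k. b i l * A l j) *\<^sub>v vec n c) $ i = 0\<^sub>v n $ i" using i by simp
qed simp

lemma det_nonzero_kernel:
  assumes "det (mat n n (\<lambda>(i,j). \<Sum>l<k. b i l * A l j)) \<noteq> (0::complex)"
    and "\<forall>l<(k::nat). (\<Sum>j<n. A l j * c j) = 0"
  shows "\<forall>j<n. c j = 0"
proof (rule ccontr)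
  assume "\<not> (\<forall>j<n. c j = 0)"
  then obtain j where j: "j < n" "c j \<noteq> 0" by blast
  have "vec n c \<noteq> 0\<^sub>v n"
  proof
    assume "vec n c = 0\<^sub>v n"
    then have "vec n c $ j = 0\<^sub>v n $ j" by simp
    then show False using j by simp
  qed
  moreover have "vec n c \<in> carrier_vec n" by simp
  moreover have "mat n n (\<lambda>(i,j). \<Sum>l<k. b i l * A l j) *\<^sub>v vec n c = 0\<^sub>v n"
    by (rule mat_mult_vec_zero[OF assms(2)])
  ultimately have "det (mat n n (\<lambda>(i,j). \<Sum>l<k. b i l * A l j)) = 0"
    using det_0_iff_vec_prod_zero[of "mat n n (\<lambda>(i,j). \<Sum>l<k. b i l * A l j)" n]
      by (meson mat_carrier)
  with assms(1) show False by simp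
qed

lemma det_gram_nonzero:
  assumes "\<forall>c. (\<forall>l<(k::nat). (\<Sum>j<n. A l j * c j) = (0::complex)) \<longrightarrow> (\<forall>j<n. c j = 0)"
  shows "det (mat n n (\<lambda>(i,j). \<Sum>l<k. cnj (A l i) * A l j)) \<noteq> 0"
proof
  assume "det (mat n n (\<lambda>(i,j). \<Sum>l<k. cnj (A l i) * A l j)) = 0"
  then obtain v where v: "v \<in> carrier_vec n" "v \<noteq> 0\<^sub>v n"
    "mat n n (\<lambda>(i,j). \<Sum>l<k. cnj (A l i) * A l j) *\<^sub>v v = 0\<^sub>v n"
    using det_0_iff_vec_prod_zero[of "mat n n (\<lambda>(i,j). \<Sum>l<k. cnj (A l i) * A l j)" n] by auto
  define c where "c j = v $ j" for j
  define u where "u l = (\<Sum>j<n. A l j * c j)" for l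
  have row0: "(\<Sum>l<k. cnj (A l i) * u l) = 0" if i: "i < n" for i
  proof -
    have "(mat n n (\<lambda>(i,j). \<Sum>l<k. cnj (A l i) * A l j) *\<^sub>v v) $ i = 0"
      using v(3) i by simp
    then have "(\<Sum>j\<in>{0..<n}. (\<Sum>l<k. cnj (A l i) * A l j) * c j) = 0"
      using i v(1) by (simp add: scalar_prod_def c_def)
    moreover have "(\<Sum>j\<in>{0..<n}. (\<Sum>l<k. cnj (A l i) * A l j) * c j) = (\<Sum>l<k. cnj (A l i) * u l)"
      unfolding u_def
      by (simp add: sum_distrib_left sum_distrib_right lessThan_atLeast0 mult.assoc) (rule sum.swap)
    ultimately show ?thesis by simp
  qed
  have "(\<Sum>l<k. cnj (u l) * u l) = (\<Sum>i<n. cnj (c i) * (\<Sum>l<k. cnj (A l i) * u l))"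
    unfolding u_def
    by (simp add: sum_distrib_left sum_distrib_right mult_ac) (rule sum.swap)
  also have "\<dots> = 0" using row0 by simp
  finally have s0: "(\<Sum>l<k. cnj (u l) * u l) = 0" .
  have "(\<Sum>l<k. cnj (u l) * u l) = (\<Sum>l<k. complex_of_real ((cmod (u l))^2))"
    by (rule sum.cong[OF refl]) (subst complex_norm_square, rule mult.commute)
  also have "\<dots> = complex_of_real (\<Sum>l<k. (cmod (u l))^2)" by (simp only: of_real_sum)
  finally have eq: "(\<Sum>l<k. cnj (u l) * u l) = complex_of_real (\<Sum>l<k. (cmod (u l))^2)" .
  have "complex_of_real (\<Sum>l<k. (cmod (u l))^2) = 0" using s0 by (simp only: eq)
  then have "(\<Sum>l<k. (cmod (u l))^2) = 0" by (simp only: of_real_eq_0_iff)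
  then have "\<forall>l\<in>{..<k}. (cmod (u l))^2 = 0"
    by (subst sum_nonneg_eq_0_iff[symmetric]) auto
  then have "\<forall>l<k. u l = 0" by simp
  then have "\<forall>j<n. c j = 0" using assms unfolding u_def by blast
  then have "v = 0\<^sub>v n" using v(1) unfolding c_def by (intro eq_vecI) auto
  with v(2) show False by simp
qed



definition Mx :: "nat \<Rightarrow> (nat \<Rightarrow> nat \<Rightarrow> complex) \<Rightarrow> (((('a \<Rightarrow> complex) \<Rightarrow> complex) \<Rightarrow> (('a \<Rightarrow> complex) \<Rightarrow> complex)) list) list
   \<Rightarrow> (nat \<Rightarrow> ('a \<Rightarrow> complex) \<Rightarrow> complex) \<Rightarrow> ('a \<Rightarrow> complex) \<Rightarrow> complex mat" where
  "Mx n b wl g x = mat n n (\<lambda>(i,j). \<Sum>l<length wl. b i l * iterD (wl!l) (g j) x)"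

lemma Mx_poly:
  fixes X :: "('n::finite \<Rightarrow> complex) set"
  assumes "\<And>l j. l < length wl \<Longrightarrow> j < n \<Longrightarrow> iterD (wl!l) (g j) \<in> regular_functions X"
  shows "\<exists>q\<in>polyfun. \<forall>x\<in>X. q x = det (Mx n b wl g x)"
proof -
  let ?k = "length wl"
  have "\<forall>l j. \<exists>p. p \<in> polyfun \<and> (l < ?k \<and> j < n \<longrightarrow> (\<forall>x\<in>X. iterD (wl!l) (g j) x = p x))"
  proof (intro allI)
    fix l j
    show "\<exists>p. p \<in> polyfun \<and> (l < ?k \<and> j < n \<longrightarrow> (\<forall>x\<in>X. iterD (wl!l) (g j) x = p x))"
    proof (cases "l < ?k \<and> j < n")
      case True
      then obtain p where "p \<in> polyfun" "\<forall>x\<in>X. iterD (wl!l) (g j) x = p x"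
        using rf_poly[OF assms] by blast
      then show ?thesis by blast
    next
      case False
      then show ?thesis using polyfun.pf_const by blast
    qed
  qed
  then obtain P where P: "\<And>l j. P l j \<in> polyfun"
    "\<And>l j x. l < ?k \<Longrightarrow> j < n \<Longrightarrow> x \<in> X \<Longrightarrow> iterD (wl!l) (g j) x = P l j x"
    by metis
  let ?q = "\<lambda>x. det (mat n n (\<lambda>(i,j). (\<lambda>i j x. \<Sum>l<?k. b i l * P l j x) i j x))"
  have "?q \<in> polyfun"
    by (rule pf_det) (intro pf_sum pf_cmult P(1) finite_lessThan)
  moreover have "\<forall>x\<in>X. ?q x = det (Mx n b wl g x)"
  proof
    fix x assume x: "x \<in> X"
    have "Mx n b wl g x = mat n n (\<lambda>(i,j). (\<lambda>i j x. \<Sum>l<?k. b i l * P l j x) i j x)"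
      unfolding Mx_def by (rule eq_matI) (auto simp: P(2)[OF _ _ x])
    then show "?q x = det (Mx n b wl g x)" by simp
  qed
  ultimately show ?thesis by (intro bexI[of _ ?q]) auto
qed


theorem mainTheorem9:
  fixes X :: "('n::finite \<Rightarrow> complex) set"
    and Fol :: "((('n \<Rightarrow> complex) \<Rightarrow> complex) \<Rightarrow> (('n \<Rightarrow> complex) \<Rightarrow> complex)) set"
    and F :: "(('n \<Rightarrow> complex) \<Rightarrow> complex) set"
  assumes "irreducible_affine_variety X"
    and "algebraic_foliation X Fol"
    and "F \<subseteq> regular_functions X"
    and "module.subspace cscale F"
    and "\<exists>B. finite B \<and> F = module.span cscale B"
  shows "\<forall>r::nat. zariski_closed {x \<in> X. phi_F X Fol F x \<le> r}"
proof -
  have der: "\<And>D. D \<in> Fol \<Longrightarrow> is_derivation X D" using assms(2) unfolding algebraic_foliation_def by blast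
  interpret fo: foli X Fol by unfold_locales (rule der)
  interpret vs: vector_space "cscale :: complex \<Rightarrow> (('n \<Rightarrow> complex) \<Rightarrow> complex) \<Rightarrow> (('n \<Rightarrow> complex) \<Rightarrow> complex)"
    by (rule vs_cscale)
  obtain Bf where Bf: "finite Bf" "F = vs.span Bf" using assms(5) by blast
  have FBf: "F \<subseteq> vs.span Bf" using Bf by simp
  have Fsub: "vs.subspace F" using assms(4) .
  have FO: "F \<subseteq> regular_functions X" using assms(3) .
  obtain S0 where S0: "S0 \<subseteq> polyfun" "X = {x. \<forall>p\<in>S0. p x = 0}"
    using assms(1) unfolding irreducible_affine_variety_def zariski_closed_def by blast
  define K where "K x = fo.Jset x \<inter> F" for x
  have Jsub: "vs.subspace (fo.Jset x)" for x
  proof -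
    have inv: "invariant_ideal_at X Fol x (fo.Jset x)" by (rule fo.J_invariant)
    then have I: "fo.Jset x \<subseteq> regular_functions X" "0 \<in> fo.Jset x"
      "\<forall>f\<in>fo.Jset x. \<forall>g\<in>fo.Jset x. f + g \<in> fo.Jset x"
      "\<forall>a\<in>regular_functions X. \<forall>f\<in>fo.Jset x. a * f \<in> fo.Jset x"
      by (simp_all add: invariant_ideal_at_def ideal_of_def)
    show ?thesis
    proof (rule vs.subspaceI)
      show "0 \<in> fo.Jset x" by (rule I(2))
      show "f + g \<in> fo.Jset x" if "f \<in> fo.Jset x" "g \<in> fo.Jset x" for f g
        using I(3) that by blast
      show "cscale c f \<in> fo.Jset x" if "f \<in> fo.Jset x" for c f
      proof -
        have "f \<in> regular_functions X" using that I(1) by blast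
        then have "cscale c f = (\<lambda>x. if x \<in> X then c else 0) * f" by (rule rf_cscale_eq)
        then show ?thesis using I(4) rf_constX that by metis
      qed
    qed
  qed
  have Ksub: "vs.subspace (K x)" for x unfolding K_def by (intro vs.subspace_inter Jsub Fsub)
  have KF: "K x \<subseteq> F" for x unfolding K_def by blast
  have phi: "phi_F X Fol F x = vs.dim F - vs.dim (K x)" for x
    unfolding phi_F_def K_def using fo.I_fol_eq[of x] by simp
  have key: "vs.dim (K x) + n \<le> vs.dim F \<longleftrightarrow>
     (\<exists>g wl b. (\<forall>j<n. g j \<in> F) \<and> set wl \<subseteq> lists Fol \<and> det (Mx n b wl g x) \<noteq> 0)" for x n
  proof
    assume "vs.dim (K x) + n \<le> vs.dim F"
    then obtain g where g: "\<forall>j<n. g j \<in> F" "\<forall>c. (\<Sum>j<n. cscale (c j) (g j)) \<in> K x \<longrightarrow> (\<forall>j<n. c j = 0)"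
      using vs.lincomb_forward[OF Bf(1) FBf Fsub Ksub KF] by blast
    define H where "H w = (if w \<in> lists Fol then {f \<in> regular_functions X. iterD w f x = 0} else UNIV)" for w
    have Hsub: "vs.subspace (H w)" for w
    proof (cases "w \<in> lists Fol")
      case True
      show ?thesis unfolding H_def using True
      proof (simp, intro vs.subspaceI)
        show "0 \<in> {f \<in> regular_functions X. iterD w f x = 0}"
        proof -
          have e0: "iterD w 0 x = 0" by (subst fo.iterD_zero[OF True]) (rule zero_fun_apply)
          show ?thesis using rf_zero e0 by blast
        qed
        show "f + g \<in> {f \<in> regular_functions X. iterD w f x = 0}"
          if "f \<in> {f \<in> regular_functions X. iterD w f x = 0}" "g \<in> {f \<in> regular_functions X. iterD w f x = 0}" for f g
          using that fo.iterD_add[OF True] rf_add by auto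
        show "cscale c f \<in> {f \<in> regular_functions X. iterD w f x = 0}"
          if "f \<in> {f \<in> regular_functions X. iterD w f x = 0}" for c f
          using that fo.iterD_cscale[OF True] rf_cscale by (auto simp: cscale_def)
      qed
    next
      case False
      then show ?thesis unfolding H_def by simp
    qed
    have "\<exists>S. finite S \<and> S \<subseteq> lists Fol \<and> F \<inter> (\<Inter>w\<in>S. H w) \<subseteq> (\<Inter>w\<in>lists Fol. H w)"
      by (rule vs.finite_witness[OF Bf(1) FBf Fsub Hsub])
    then obtain S where S: "finite S" "S \<subseteq> lists Fol" "F \<inter> (\<Inter>w\<in>S. H w) \<subseteq> (\<Inter>w\<in>lists Fol. H w)"
      by (elim exE conjE)
    obtain wl where wl: "set wl = S" using finite_list[OF S(1)] by blast
    define A where "A l j = iterD (wl!l) (g j) x" for l j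
    have "\<forall>c. (\<forall>l<length wl. (\<Sum>j<n. A l j * c j) = 0) \<longrightarrow> (\<forall>j<n. c j = 0)"
    proof (rule allI, rule impI)
      fix c assume c: "\<forall>l<length wl. (\<Sum>j<n. A l j * c j) = 0"
      define f where "f = (\<Sum>j<n. cscale (c j) (g j))"
      have fF: "f \<in> F" unfolding f_def using g(1) Fsub by (intro vs.subspace_sum vs.subspace_scale) auto
      have fO: "f \<in> regular_functions X" using FO fF by (rule subsetD)
      have fH: "f \<in> H w" if "w \<in> S" for w
      proof -
        have "w \<in> set wl" using that wl by simp
        then obtain l where l: "l < length wl" "wl ! l = w" unfolding in_set_conv_nth by blast
        have wF: "w \<in> lists Fol" using that S(2) by blast
        have "iterD w f x = (\<Sum>j<n. c j * iterD w (g j) x)"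
          unfolding f_def by (rule fo.iterD_lincomb[OF wF]) (use g(1) FO in blast)
        also have "\<dots> = (\<Sum>j<n. A l j * c j)" unfolding A_def using l by (simp add: mult.commute)
        also have "\<dots> = 0" using c l by blast
        finally show ?thesis unfolding H_def using wF fO by simp
      qed
      then have "f \<in> (\<Inter>w\<in>lists Fol. H w)" using S(3) fF by blast
      then have "f \<in> fo.Jset x" using fO unfolding H_def fo.Jset_def by auto
      then have "f \<in> K x" using fF K_def by blast
      then show "\<forall>j<n. c j = 0" using g(2) f_def by blast
    qed
    then have "det (mat n n (\<lambda>(i,j). \<Sum>l<length wl. cnj (A l i) * A l j)) \<noteq> 0" by (rule det_gram_nonzero)
    then have "det (Mx n (\<lambda>i l. cnj (A l i)) wl g x) \<noteq> 0" unfolding Mx_def A_def by simp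
    then show "\<exists>g wl b. (\<forall>j<n. g j \<in> F) \<and> set wl \<subseteq> lists Fol \<and> det (Mx n b wl g x) \<noteq> 0"
      using g(1) wl S(2) by blast
  next
    assume "\<exists>g wl b. (\<forall>j<n. g j \<in> F) \<and> set wl \<subseteq> lists Fol \<and> det (Mx n b wl g x) \<noteq> 0"
    then obtain g wl b where g: "\<forall>j<n. g j \<in> F" "set wl \<subseteq> lists Fol" "det (Mx n b wl g x) \<noteq> 0" by blast
    define A where "A l j = iterD (wl!l) (g j) x" for l j
    have d: "det (mat n n (\<lambda>(i,j). \<Sum>l<length wl. b i l * A l j)) \<noteq> 0" using g(3) unfolding Mx_def A_def .
    have "\<forall>c. (\<Sum>j<n. cscale (c j) (g j)) \<in> K x \<longrightarrow> (\<forall>j<n. c j = 0)"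
    proof (rule allI, rule impI)
      fix c assume cK: "(\<Sum>j<n. cscale (c j) (g j)) \<in> K x"
      have "\<forall>l<length wl. (\<Sum>j<n. A l j * c j) = 0"
      proof (intro allI impI)
        fix l assume l: "l < length wl"
        have wF: "wl ! l \<in> lists Fol" using g(2) l nth_mem by blast
        have "(\<Sum>j<n. A l j * c j) = iterD (wl!l) (\<Sum>j<n. cscale (c j) (g j)) x"
          unfolding A_def by (subst fo.iterD_lincomb[OF wF]) (use g(1) FO in \<open>auto simp: mult.commute\<close>)
        also have "\<dots> = 0" using cK wF unfolding K_def fo.Jset_def by blast
        finally show "(\<Sum>j<n. A l j * c j) = 0" .
      qed
      then show "\<forall>j<n. c j = 0" by (rule det_nonzero_kernel[OF d])
    qed
    then show "vs.dim (K x) + n \<le> vs.dim F"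
      by (rule vs.lincomb_backward[OF Bf(1) FBf Fsub Ksub KF g(1)])
  qed
  show ?thesis
  proof
    fix r :: nat
    define S1 where "S1 = {q \<in> polyfun. \<exists>g wl b. (\<forall>j<Suc r. g j \<in> F) \<and> set wl \<subseteq> lists Fol \<and>
       (\<forall>x\<in>X. q x = det (Mx (Suc r) b wl g x))}"
    have "{x \<in> X. phi_F X Fol F x \<le> r} = {x. \<forall>p\<in>S0 \<union> S1. p x = 0}"
    proof (rule Set.set_eqI, rule iffI)
      fix x assume "x \<in> {x \<in> X. phi_F X Fol F x \<le> r}"
      then have x: "x \<in> X" "phi_F X Fol F x \<le> r" by auto
      then have "\<not> (vs.dim (K x) + Suc r \<le> vs.dim F)" using phi[of x] by simp
      then have nd: "\<forall>g wl b. (\<forall>j<Suc r. g j \<in> F) \<longrightarrow> set wl \<subseteq> lists Fol \<longrightarrow> det (Mx (Suc r) b wl g x) = 0"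
        using key[of x "Suc r"] by blast
      have "\<forall>p\<in>S0. p x = 0" using x S0(2) by blast
      moreover have "\<forall>p\<in>S1. p x = 0"
      proof
        fix p assume "p \<in> S1"
        then obtain g wl b where "\<forall>j<Suc r. g j \<in> F" "set wl \<subseteq> lists Fol" "\<forall>x\<in>X. p x = det (Mx (Suc r) b wl g x)"
          unfolding S1_def by blast
        then show "p x = 0" using nd x(1) by metis
      qed
      ultimately show "x \<in> {x. \<forall>p\<in>S0 \<union> S1. p x = 0}" by blast
    next
      fix x assume "x \<in> {x. \<forall>p\<in>S0 \<union> S1. p x = 0}"
      then have x: "x \<in> X" and s1: "\<forall>p\<in>S1. p x = 0" using S0(2) by auto
      have "\<forall>g wl b. (\<forall>j<Suc r. g j \<in> F) \<longrightarrow> set wl \<subseteq> lists Fol \<longrightarrow> det (Mx (Suc r) b wl g x) = 0"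
      proof (intro allI impI)
        fix g wl b assume g: "\<forall>j<Suc r. g j \<in> F" "set wl \<subseteq> lists Fol"
        have "\<And>l j. l < length wl \<Longrightarrow> j < Suc r \<Longrightarrow> iterD (wl!l) (g j) \<in> regular_functions X"
        proof -
          fix l j assume "l < length wl" "j < Suc r"
          then have "wl ! l \<in> lists Fol" "g j \<in> regular_functions X" using g FO nth_mem by blast+
          then show "iterD (wl!l) (g j) \<in> regular_functions X" by (rule fo.iterD_rf)
        qed
        then obtain q where q: "q \<in> polyfun" "\<forall>x\<in>X. q x = det (Mx (Suc r) b wl g x)"
          using Mx_poly by blast
        then have "q \<in> S1" unfolding S1_def using g by blast
        then show "det (Mx (Suc r) b wl g x) = 0" using s1 q x by auto
      qed
      then have "\<not> (vs.dim (K x) + Suc r \<le> vs.dim F)" using key[of x "Suc r"] by blast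
      then show "x \<in> {x \<in> X. phi_F X Fol F x \<le> r}" using x phi[of x] by simp
    qed
    moreover have "S0 \<union> S1 \<subseteq> polyfun" using S0 unfolding S1_def by blast
    ultimately show "zariski_closed {x \<in> X. phi_F X Fol F x \<le> r}" unfolding zariski_closed_def by blast
  qed
qed


end
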